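(* Let $\varepsilon^*,C^*,\gamma>0$, $\lambda_1,\lambda_2>0$, and suppose $\lambda_1h\le\Delta t\le\lambda_2h$. Let $\check\rho^n,\check\rho^{n+1}\in\mathcal C$ with $\varepsilon^*\le\check\rho^{n+1}\le C^*$ and $0<\check\rho^n\le C^*$ pointwise, let $\rho^n,\rho^{n+1}\in\mathcal C$ be pointwise positive, set $\tilde\rho^k=\check\rho^k-\rho^k$ ($k=n,n+1$), and assume $\|\tilde\rho^n\|_2\le\Delta t^{15/4}+h^{15/4}$. Let $\tilde\psi^n\in\mathcal C$ with $\|\tilde\psi^n\|_\infty\le h$. Define $\tilde S^{n+\frac12}=\check S^{n+\frac12}-S^{n+\frac12}$, where $$\check S^{n+\frac12}=\ln\check\rho^{n+1}-\frac{\check\rho^{n+1}-\check\rho^n}{2\check\rho^{n+1}}-\frac{(\check\rho^{n+1}-\check\rho^n)^2}{6(\check\rho^{n+1})^2},\quad S^{n+\frac12}=\ln\rho^{n+1}-\frac{\rho^{n+1}-\rho^n}{2\rho^{n+1}}-\frac{(\rho^{n+1}-\rho^n)^2}{6(\rho^{n+1})^2},$$ let $\mathbb K=\{(i,j,k):\rho^{n+1}_{i,j,k}\ge 2C^*+1\}$ and $L^*=|\mathbb K|$. Then there exist constants $\check C_2$ (depending only on $\varepsilon^*,\gamma,C^*$) and $\check C_3$ (depending only on $C^*,\gamma$) such that, for $\Delta t,h$ sufficiently small, $$\langle\tilde\rho^{n+1},\gamma\tilde S^{n+\frac12}+\tilde\psi^n\rangle\ge\frac{C^*}{6}\gamma L^*h^3-\check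 C_2\big(\gamma^2\|\tilde\rho^n\|_2^2+\|\tilde\psi^n\|_2^2\big),$$ and, if $L^*=0$, $$\langle\tilde\rho^{n+1},\gamma\tilde S^{n+\frac12}+\tilde\psi^n\rangle\ge\check C_3\|\tilde\rho^{n+1}\|_2^2-\check C_2\big(\gamma^2\|\tilde\rho^n\|_2^2+\|\tilde\psi^n\|_2^2\big).$$
   Context: Grid: $\Omega=(a,b)^3$, $h=(b-a)/N$; $\mathcal C$ is the space of real grid functions on the cell centers indexed by $1\le i,j,k\le N$. $\langle f,g\rangle=h^3\sum_{i,j,k=1}^Nf_{i,j,k}g_{i,j,k}$, $\|f\|_2^2=\langle f,f\rangle$, $\|f\|_\infty=\max_{i,j,k}|f_{i,j,k}|$. All nonlinear functions are applied pointwise. *)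

theory Defs
  imports "HOL-Analysis.Analysis"
begin

type_synonym grid_fun = "nat \<times> nat \<times> nat \<Rightarrow> real"

definition grid :: "nat \<Rightarrow> (nat \<times> nat \<times> nat) set" where
  "grid N = {1..N} \<times> {1..N} \<times> {1..N}"

definition ginner :: "real \<Rightarrow> nat \<Rightarrow> grid_fun \<Rightarrow> grid_fun \<Rightarrow> real" where
  "ginner h N f g = h ^ 3 * (\<Sum>p\<in>grid N. f p * g p)"

definition gnorm2 :: "real \<Rightarrow> nat \<Rightarrow> grid_fun \<Rightarrow> real" where
  "gnorm2 h N f = sqrt (ginner h N f f)"

definition gnorminf :: "nat \<Rightarrow> grid_fun \<Rightarrow> real" where
  "gnorminf N f = Max ((\<lambda>p. \<bar>f p\<bar>) ` grid N)"

definition Sfun :: "real \<Rightarrow> real \<Rightarrow> real" where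
  "Sfun r1 r0 = ln r1 - (r1 - r0) / (2 * r1) - (r1 - r0)^2 / (6 * r1^2)"

end

theory Submission imports Defs begin

lemma Sfun_deriv:
  assumes "r > 0"
  shows "((\<lambda>r. Sfun r y) has_real_derivative (6*r^2 - 5*r*y + 2*y^2)/(6*r^3)) (at r)"
  unfolding Sfun_def using assms
  by (auto intro!: derivative_eq_intros simp: field_simps power2_eq_square power3_eq_cube)

lemma Sfun_mono:
  assumes "0 < u" "u \<le> v"
  shows "Sfun v y - Sfun u y \<ge> 23/48*(ln v - ln u)"
proof -
  have "(\<lambda>r. Sfun r y - 23/48*ln r) u \<le> (\<lambda>r. Sfun r y - 23/48*ln r) v"
  proof (rule DERIV_nonneg_imp_nondecreasing[OF assms(2)])
    fix x assume x: "u \<le> x" "x \<le> v"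
    hence xp: "x > 0" using assms by simp
    have d: "((\<lambda>r. Sfun r y - 23/48*ln r) has_real_derivative
       (6*x^2 - 5*x*y + 2*y^2)/(6*x^3) - 23/48*(1/x)) (at x)"
      using xp by (auto intro!: derivative_eq_intros Sfun_deriv)
    have "(6*x^2 - 5*x*y + 2*y^2)/(6*x^3) - 23/48*(1/x) = (5*x-4*y)^2/(48*x^3)"
      using xp by (simp add: field_simps power2_eq_square power3_eq_cube)
    moreover have "(5*x-4*y)^2/(48*x^3) \<ge> 0" using xp by simp
    ultimately show "\<exists>d. ((\<lambda>r. Sfun r y - 23/48*ln r) has_real_derivative d) (at x) \<and> d \<ge> 0"
      using d by metis
  qed
  thus ?thesis by simp
qed

lemma t1M:
  assumes "rc > 0" "r > 0"
  shows "(rc - r)*(Sfun rc y - Sfun r y) \<ge> 23/48*((rc-r)*(ln rc - ln r))"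
proof (cases "r \<le> rc")
  case True
  from Sfun_mono[OF assms(2) True, of y] True show ?thesis
    by (metis diff_ge_0_iff_ge mult.left_commute mult_left_mono)
next
  case False
  hence "rc \<le> r" by simp
  from Sfun_mono[OF assms(1) this, of y] False have "(r - rc)*(Sfun r y - Sfun rc y) \<ge> (r-rc)*(23/48*(ln r - ln rc))"
    by (intro mult_left_mono) auto
  moreover have "(r - rc)*(Sfun r y - Sfun rc y) = (rc - r)*(Sfun rc y - Sfun r y)" by algebra
  moreover have "(r-rc)*(23/48*(ln r - ln rc)) = 23/48*((rc-r)*(ln rc - ln r))" by algebra
  ultimately show ?thesis by linarith
qed

lemma lnlow:
  fixes a b :: real
  assumes "a > 0" "b > 0"
  shows "ln a - ln b \<ge> (a-b)/a"
proof -
  have "ln (b/a) \<le> b/a - 1" using ln_le_minus_one[of "b/a"] assms by simp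
  thus ?thesis using assms by (simp add: ln_div field_simps)
qed

lemma lnprod:
  fixes a b :: real
  assumes "a > 0" "b > 0" "b \<le> a"
  shows "(a-b)*(ln a - ln b) \<ge> (a-b)^2/a"
proof -
  have "ln (b/a) \<le> b/a - 1" using ln_le_minus_one[of "b/a"] assms by simp
  hence "ln a - ln b \<ge> (a-b)/a" using assms by (simp add: ln_div field_simps)
  hence "(a-b)*(ln a - ln b) \<ge> (a-b)*((a-b)/a)" using assms by (intro mult_left_mono) auto
  thus ?thesis by (simp add: power2_eq_square)
qed

lemma Sdiff0:
  assumes "r > 0"
  shows "Sfun r a - Sfun r b = (a-b)*((5*r-a-b)/(6*r^2))"
  using assms unfolding Sfun_def by (simp add: field_simps power2_eq_square)

lemma young:
  fixes k x y :: real
  assumes "k > 0"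
  shows "x*y \<le> k/2*x^2 + y^2/(2*k)"
proof -
  have "0 \<le> (k*x - y)^2/(2*k)" using assms by simp
  also have "\<dots> = k/2*x^2 + y^2/(2*k) - x*y" using assms
    by (simp add: field_simps power2_eq_square)
  finally show ?thesis by simp
qed

lemma pointwise:
  fixes Cs \<gamma> \<epsilon>s \<eta> rc0 rc1 r0 r1 ps :: real
  defines "K \<equiv> (7*Cs+1)/(6*\<epsilon>s^2)" and "c \<equiv> (23/48)/(2*Cs+1)"
  assumes Cs: "Cs>0" and g: "\<gamma>>0" and es: "\<epsilon>s>0" and "\<epsilon>s \<le> rc1" "rc1 \<le> Cs" "0<rc0" "rc0 \<le> Cs"
    "0<r0" and r1p: "0<r1" and "\<bar>rc0 - r0\<bar> \<le> \<eta>" "\<eta> \<le> 1" and etaK: "192*K*\<eta> \<le> 7" and "\<bar>ps\<bar> \<le> 7*\<gamma>/192"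
  shows "(rc1-r1)*(\<gamma>*(Sfun rc1 rc0 - Sfun r1 r0) + ps) \<ge>
     (if r1 \<ge> 2*Cs+1 then Cs/6*\<gamma> else \<gamma>*c/2*(rc1-r1)^2)
     - max (K^2) 1/(\<gamma>*c) * (\<gamma>^2*(rc0-r0)^2 + ps^2)"
proof -
  define t0 where "t0 = rc0 - r0"
  define t1 where "t1 = rc1 - r1"
  define Kp where "Kp = (5*rc1 - rc0 - r0)/(6*rc1^2)"
  define M where "M = Sfun rc1 r0 - Sfun r1 r0"
  have rc1p: "rc1 > 0" using assms by linarith
  have tS: "Sfun rc1 rc0 - Sfun r1 r0 = t0*Kp + M"
    using Sdiff0[OF rc1p, of rc0 r0] unfolding t0_def Kp_def M_def by simp
  have Kpos: "K \<ge> 0" unfolding K_def using Cs by simp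
  have cpos: "c > 0" unfolding c_def using Cs by simp
  have num: "\<bar>5*rc1 - rc0 - r0\<bar> \<le> 7*Cs+1" using assms by (auto simp: abs_le_iff)
  have den: "6*\<epsilon>s^2 \<le> 6*rc1^2" using assms by (simp add: power_mono)
  have "\<bar>Kp\<bar> = \<bar>5*rc1 - rc0 - r0\<bar>/(6*rc1^2)" unfolding Kp_def by (simp add: abs_divide)
  also have "\<dots> \<le> (7*Cs+1)/(6*\<epsilon>s^2)"
    by (rule frac_le) (use num den es Cs in auto)
  finally have Kp: "\<bar>Kp\<bar> \<le> K" unfolding K_def .
  define e where "e = \<gamma>*K*\<bar>t0\<bar> + \<bar>ps\<bar>"
  have epos: "e \<ge> 0" unfolding e_def using g Kpos by simp
  have "\<bar>\<gamma>*t0*Kp + ps\<bar> \<le> \<gamma>*\<bar>t0\<bar>*\<bar>Kp\<bar> + \<bar>ps\<bar>"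
    using g by (simp add: abs_mult abs_triangle_ineq order_trans[OF abs_triangle_ineq])
  also have "\<dots> \<le> e"
  proof -
    have "\<bar>t0\<bar>*\<bar>Kp\<bar> \<le> \<bar>t0\<bar>*K" using Kp by (intro mult_left_mono) auto
    hence "\<gamma>*(\<bar>t0\<bar>*\<bar>Kp\<bar>) \<le> \<gamma>*(\<bar>t0\<bar>*K)" by (rule mult_left_mono) (use g in auto)
    thus ?thesis unfolding e_def by (simp add: algebra_simps)
  qed
  finally have ee: "\<bar>\<gamma>*t0*Kp + ps\<bar> \<le> e" .
  have feq: "(rc1-r1)*(\<gamma>*(Sfun rc1 rc0 - Sfun r1 r0) + ps) = \<gamma>*(t1*M) + t1*(\<gamma>*t0*Kp + ps)"
    unfolding tS t1_def by (simp add: algebra_simps)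
  have "t1*(\<gamma>*t0*Kp + ps) \<ge> - (\<bar>t1\<bar>*e)"
  proof -
    have "\<bar>t1*(\<gamma>*t0*Kp + ps)\<bar> \<le> \<bar>t1\<bar>*e" using ee by (simp add: abs_mult mult_left_mono)
    thus ?thesis by linarith
  qed
  hence f1: "(rc1-r1)*(\<gamma>*(Sfun rc1 rc0 - Sfun r1 r0) + ps) \<ge> \<gamma>*(t1*M) - \<bar>t1\<bar>*e"
    using feq by linarith
  have tM: "t1*M \<ge> 23/48*(t1*(ln rc1 - ln r1))"
    using t1M[OF rc1p r1p, of r0] unfolding t1_def M_def by simp
  have C2pos: "max (K^2) 1/(\<gamma>*c) * (\<gamma>^2*(rc0-r0)^2 + ps^2) \<ge> 0"
    using g cpos by simp
  show ?thesis
  proof (cases "r1 \<ge> 2*Cs+1")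
    case True
    have "ln r1 - ln rc1 \<ge> (r1-rc1)/r1" by (rule lnlow) (use rc1p assms in auto)
    moreover have "(r1-rc1)/r1 \<ge> 1/2" using True assms by (simp add: field_simps)
    ultimately have "ln r1 - ln rc1 \<ge> 1/2" by linarith
    moreover have t1n: "-t1 \<ge> Cs+1" unfolding t1_def using True assms by linarith
    ultimately have "(-t1)*(ln r1 - ln rc1) \<ge> (-t1)*(1/2)"
      using Cs by (intro mult_left_mono) auto
    hence "t1*M \<ge> 23/96*(-t1)" using tM by (simp add: algebra_simps)
    hence "\<gamma>*(t1*M) \<ge> \<gamma>*(23/96*(-t1))" by (rule mult_left_mono) (use g in auto)
    moreover have "\<bar>t1\<bar> = -t1" using t1n Cs by simp
    moreover have "e \<le> 7*\<gamma>/96"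
    proof -
      have "\<bar>t0\<bar> \<le> \<eta>" unfolding t0_def using assms(12) .
      hence "\<gamma>*K*\<bar>t0\<bar> \<le> \<gamma>*K*\<eta>" by (rule mult_left_mono) (use g Kpos in simp)
      moreover have "\<gamma>*K*\<eta> \<le> 7*\<gamma>/192" using g etaK by (simp add: field_simps)
      ultimately show ?thesis unfolding e_def using assms by linarith
    qed
    ultimately have "\<gamma>*(t1*M) - \<bar>t1\<bar>*e \<ge> \<gamma>*(23/96*(-t1)) - (-t1)*(7*\<gamma>/96)"
      using t1n Cs by (smt (verit, ccfv_SIG) mult_left_mono)
    moreover have "\<gamma>*(23/96*(-t1)) - (-t1)*(7*\<gamma>/96) = (-t1)*\<gamma>/6" by (simp add: algebra_simps)
    moreover have "(-t1)*\<gamma>/6 \<ge> Cs/6*\<gamma>"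
    proof -
      have "Cs*\<gamma> \<le> (-t1)*\<gamma>" by (rule mult_right_mono) (use t1n g in auto)
      thus ?thesis by simp
    qed
    ultimately have "Cs/6*\<gamma> \<le> (rc1-r1)*(\<gamma>*(Sfun rc1 rc0 - Sfun r1 r0) + ps)" using f1 by linarith
    thus ?thesis using True C2pos by simp
  next
    case False
    have mx: "t1*(ln rc1 - ln r1) \<ge> t1^2/(2*Cs+1)"
    proof (cases "r1 \<le> rc1")
      case True
      have "t1*(ln rc1 - ln r1) \<ge> t1^2/rc1" using lnprod[OF rc1p r1p True] unfolding t1_def .
      moreover have "t1^2/rc1 \<ge> t1^2/(2*Cs+1)" by (rule divide_left_mono) (use rc1p assms in auto)
      ultimately show ?thesis by linarith
    next
      case F2: False
      have "(r1-rc1)*(ln r1 - ln rc1) \<ge> (r1-rc1)^2/r1" using lnprod[OF r1p rc1p] F2 by simp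
      moreover have "(r1-rc1)^2/r1 \<ge> (r1-rc1)^2/(2*Cs+1)" by (rule divide_left_mono) (use False assms in auto)
      moreover have "(r1-rc1)*(ln r1 - ln rc1) = t1*(ln rc1 - ln r1)" unfolding t1_def by algebra
      moreover have "(r1-rc1)^2 = t1^2" unfolding t1_def by algebra
      ultimately show ?thesis by (metis order_trans)
    qed
    have ceq: "c*t1^2 = 23/48*(t1^2/(2*Cs+1))" unfolding c_def by simp
    have "t1*M \<ge> c*t1^2" unfolding ceq using tM mx by linarith
    hence A: "\<gamma>*(t1*M) \<ge> \<gamma>*c*t1^2" using g by (metis mult.assoc mult_left_mono less_imp_le)
    have B: "\<bar>t1\<bar>*e \<le> \<gamma>*c/2*t1^2 + e^2/(2*\<gamma>*c)"
      using young[of "\<gamma>*c" "\<bar>t1\<bar>" e] g cpos by (simp add: mult.assoc)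
    have Ce: "e^2 \<le> 2*(\<gamma>^2*K^2*t0^2 + ps^2)"
    proof -
      have "0 \<le> (\<gamma>*K*\<bar>t0\<bar> - \<bar>ps\<bar>)^2" by simp
      thus ?thesis unfolding e_def by (simp add: power2_eq_square algebra_simps)
    qed
    have D: "e^2/(2*\<gamma>*c) \<le> max (K^2) 1/(\<gamma>*c) * (\<gamma>^2*t0^2 + ps^2)"
    proof -
      have "e^2/(2*\<gamma>*c) \<le> 2*(\<gamma>^2*K^2*t0^2 + ps^2)/(2*\<gamma>*c)"
        by (rule divide_right_mono[OF Ce]) (use g cpos in simp)
      also have "\<dots> = (\<gamma>^2*K^2*t0^2 + ps^2)/(\<gamma>*c)"
        by (metis (no_types) distrib_left mult.assoc mult_divide_mult_cancel_left_if zero_neq_numeral)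
      also have "\<dots> \<le> (max (K^2) 1 * (\<gamma>^2*t0^2 + ps^2))/(\<gamma>*c)"
      proof (rule divide_right_mono)
        have "\<gamma>^2*K^2*t0^2 \<le> \<gamma>^2*max (K^2) 1*t0^2" by (intro mult_right_mono mult_left_mono) auto
        moreover have "ps^2 \<le> max (K^2) 1 * ps^2" using mult_right_mono[of 1 "max (K^2) 1" "ps^2"] by simp
        ultimately show "\<gamma>^2*K^2*t0^2 + ps^2 \<le> max (K^2) 1 * (\<gamma>^2*t0^2 + ps^2)"
          by (simp add: algebra_simps)
      qed (use g cpos in simp)
      finally show ?thesis by simp
    qed
    show ?thesis using f1 A B D False unfolding t0_def t1_def by simp
  qed
qed

lemma finite_grid: "finite (grid N)" unfolding grid_def by simp

lemma gnorm2_sq: "h \<ge> 0 \<Longrightarrow> (gnorm2 h N f)^2 = h^3 * (\<Sum>p\<in>grid N. (f p)^2)"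
  unfolding gnorm2_def ginner_def
proof -
  assume h: "h \<ge> 0"
  have "0 \<le> h ^ 3 * (\<Sum>p\<in>grid N. f p * f p)"
    using h by (simp add: sum_nonneg)
  thus "(sqrt (h ^ 3 * (\<Sum>p\<in>grid N. f p * f p)))\<^sup>2 = h ^ 3 * (\<Sum>p\<in>grid N. (f p)\<^sup>2)"
    by (simp add: power2_eq_square)
qed

lemma core:
  fixes Cs \<gamma> \<epsilon>s \<eta> h :: real and N :: nat and rc0 rc1 r0 r1 psi :: grid_fun
  defines "K \<equiv> (7*Cs+1)/(6*\<epsilon>s^2)" and "c \<equiv> (23/48)/(2*Cs+1)"
  assumes Cs: "Cs>0" and g: "\<gamma>>0" and es: "\<epsilon>s>0" and h: "h \<ge> 0"
    and H1: "\<forall>p\<in>grid N. \<epsilon>s \<le> rc1 p \<and> rc1 p \<le> Cs"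
    and H2: "\<forall>p\<in>grid N. 0 < rc0 p \<and> rc0 p \<le> Cs"
    and H3: "\<forall>p\<in>grid N. 0 < r0 p \<and> 0 < r1 p"
    and H4: "\<forall>p\<in>grid N. \<bar>rc0 p - r0 p\<bar> \<le> \<eta>"
    and H5: "\<eta> \<le> 1" "192*K*\<eta> \<le> 7"
    and H6: "\<forall>p\<in>grid N. \<bar>psi p\<bar> \<le> 7*\<gamma>/192"
  shows "let t0 = (\<lambda>p. rc0 p - r0 p);
             t1 = (\<lambda>p. rc1 p - r1 p);
             tS = (\<lambda>p. Sfun (rc1 p) (rc0 p) - Sfun (r1 p) (r0 p));
             L = card {p \<in> grid N. r1 p \<ge> 2 * Cs + 1};
             lhs = ginner h N t1 (\<lambda>p. \<gamma> * tS p + psi p);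
             err = (max (K^2) 1/(\<gamma>*c)) * (\<gamma>^2 * (gnorm2 h N t0)^2 + (gnorm2 h N psi)^2)
         in lhs \<ge> Cs / 6 * \<gamma> * real L * h^3 - err
            \<and> (L = 0 \<longrightarrow> lhs \<ge> (\<gamma>*c/2) * (gnorm2 h N t1)^2 - err)"
proof -
  define C2 where "C2 = max (K^2) 1/(\<gamma>*c)"
  define C3 where "C3 = \<gamma>*c/2"
  define F where "F p = (rc1 p - r1 p)*(\<gamma>*(Sfun (rc1 p) (rc0 p) - Sfun (r1 p) (r0 p)) + psi p)" for p
  define G where "G p = (if r1 p \<ge> 2*Cs+1 then Cs/6*\<gamma> else C3*(rc1 p - r1 p)^2)" for p
  define E where "E p = C2 * (\<gamma>^2*(rc0 p - r0 p)^2 + (psi p)^2)" for p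
  define KK where "KK = {p \<in> grid N. r1 p \<ge> 2 * Cs + 1}"
  have cpos: "c > 0" unfolding c_def using Cs by simp
  have C3pos: "C3 \<ge> 0" unfolding C3_def using g cpos by simp
  have pw: "F p \<ge> G p - E p" if p: "p \<in> grid N" for p
    unfolding F_def G_def E_def C2_def C3_def K_def c_def
    by (rule pointwise) (use Cs g es H1 H2 H3 H4 H5[unfolded K_def] H6 p in auto)
  have fin: "finite (grid N)" by (rule finite_grid)
  have sF: "(\<Sum>p\<in>grid N. F p) \<ge> (\<Sum>p\<in>grid N. G p) - (\<Sum>p\<in>grid N. E p)"
    using sum_mono[of "grid N" "\<lambda>p. G p - E p" F] pw by (simp add: sum_subtractf)
  have lhs: "ginner h N (\<lambda>p. rc1 p - r1 p) (\<lambda>p. \<gamma> * (Sfun (rc1 p) (rc0 p) - Sfun (r1 p) (r0 p)) + psi p)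
       = h^3 * (\<Sum>p\<in>grid N. F p)" unfolding ginner_def F_def by simp
  have err: "C2 * (\<gamma>^2 * (gnorm2 h N (\<lambda>p. rc0 p - r0 p))^2 + (gnorm2 h N psi)^2) = h^3 * (\<Sum>p\<in>grid N. E p)"
    unfolding gnorm2_sq[OF h] E_def
    by (simp add: sum_distrib_left sum.distrib algebra_simps)
  have sG1: "(\<Sum>p\<in>grid N. G p) \<ge> Cs/6*\<gamma> * real (card KK)"
  proof -
    have "(\<Sum>p\<in>grid N. G p) \<ge> (\<Sum>p\<in>grid N. if r1 p \<ge> 2*Cs+1 then Cs/6*\<gamma> else 0)"
      by (rule sum_mono) (auto simp: G_def C3pos)
    also have "(\<Sum>p\<in>grid N. if r1 p \<ge> 2*Cs+1 then Cs/6*\<gamma> else 0) = (\<Sum>p\<in>KK. Cs/6*\<gamma>)"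
      unfolding KK_def using sum.inter_filter[OF fin, of "\<lambda>_. Cs/6*\<gamma>" "\<lambda>p. r1 p \<ge> 2*Cs+1"] by simp
    finally show ?thesis by (simp add: algebra_simps)
  qed
  have sG2: "(\<Sum>p\<in>grid N. G p) = C3 * (\<Sum>p\<in>grid N. (rc1 p - r1 p)^2)" if L0: "card KK = 0"
  proof -
    have "KK = {}" using L0 fin unfolding KK_def by simp
    hence "\<forall>p\<in>grid N. \<not> r1 p \<ge> 2*Cs+1" unfolding KK_def by blast
    thus ?thesis unfolding G_def by (simp add: sum_distrib_left)
  qed
  have h3: "h^3 \<ge> 0" using h by simp
  have A: "h^3 * (\<Sum>p\<in>grid N. F p) \<ge> Cs/6*\<gamma>*real (card KK)*h^3 - h^3 * (\<Sum>p\<in>grid N. E p)"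
  proof -
    have "h^3 * (\<Sum>p\<in>grid N. F p) \<ge> h^3 * (Cs/6*\<gamma> * real (card KK) - (\<Sum>p\<in>grid N. E p))"
      by (rule mult_left_mono) (use sF sG1 h3 in linarith)+
    thus ?thesis by (simp add: algebra_simps)
  qed
  have B: "h^3 * (\<Sum>p\<in>grid N. F p) \<ge> C3 * (gnorm2 h N (\<lambda>p. rc1 p - r1 p))^2 - h^3 * (\<Sum>p\<in>grid N. E p)"
    if L0: "card KK = 0"
  proof -
    have "h^3 * (\<Sum>p\<in>grid N. F p) \<ge> h^3 * (C3 * (\<Sum>p\<in>grid N. (rc1 p - r1 p)^2) - (\<Sum>p\<in>grid N. E p))"
      by (rule mult_left_mono) (use sF sG2[OF L0] h3 in linarith)+
    thus ?thesis unfolding gnorm2_sq[OF h] by (simp add: algebra_simps)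
  qed
  show ?thesis unfolding Let_def
    using A B lhs err unfolding KK_def C2_def C3_def by simp
qed

lemma t0small:
  fixes h dt lam2 \<eta> :: real and f :: grid_fun
  assumes h0: "h > 0" and h1: "h \<le> 1" and dt0: "0 < dt" and dtl: "dt \<le> lam2*h" and l2: "lam2 > 0"
    and nb: "gnorm2 h N f \<le> dt powr (15/4) + h powr (15/4)" and p: "p \<in> grid N"
    and sm: "(lam2 powr (15/4) + 1)^2 * h \<le> \<eta>^2" and eta: "\<eta> \<ge> 0"
  shows "\<bar>f p\<bar> \<le> \<eta>"
proof -
  define \<Lambda> where "\<Lambda> = lam2 powr (15/4)"
  have Lp: "\<Lambda> \<ge> 0" unfolding \<Lambda>_def by simp
  have "h powr (15/4) \<le> h powr 3" by (rule powr_mono') (use h0 h1 in auto)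
  also have "h powr 3 = h^3" using powr_realpow[OF h0, of 3] by simp
  finally have hp: "h powr (15/4) \<le> h^3" .
  have "dt powr (15/4) \<le> (lam2*h) powr (15/4)" by (rule powr_mono2) (use dt0 dtl in auto)
  also have "\<dots> = \<Lambda> * h powr (15/4)" unfolding \<Lambda>_def by (rule powr_mult)
  also have "\<dots> \<le> \<Lambda> * h^3" by (rule mult_left_mono[OF hp Lp])
  finally have "gnorm2 h N f \<le> (\<Lambda>+1)*h^3" using nb hp by (simp add: algebra_simps)
  moreover have "gnorm2 h N f \<ge> 0" unfolding gnorm2_def ginner_def using h0 by (simp add: sum_nonneg)
  ultimately have "(gnorm2 h N f)^2 \<le> ((\<Lambda>+1)*h^3)^2" by (metis power_mono)
  moreover have "h^3 * (f p)^2 \<le> (gnorm2 h N f)^2"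
  proof -
    have "(f p)^2 \<le> (\<Sum>q\<in>grid N. (f q)^2)"
      by (rule member_le_sum) (use p finite_grid in auto)
    hence "h^3 * (f p)^2 \<le> h^3 * (\<Sum>q\<in>grid N. (f q)^2)" using h0 by simp
    thus ?thesis using gnorm2_sq[of h N f] h0 by simp
  qed
  moreover have "((\<Lambda>+1)*h^3)^2 = h^3 * ((\<Lambda>+1)^2 * h^3)" by (simp add: power2_eq_square)
  ultimately have "h^3 * (f p)^2 \<le> h^3 * ((\<Lambda>+1)^2 * h^3)" by linarith
  hence "(f p)^2 \<le> (\<Lambda>+1)^2 * h^3" using h0 by simp
  also have "\<dots> \<le> (\<Lambda>+1)^2 * h"
  proof (rule mult_left_mono)
    have "h^3 \<le> h^1" by (rule power_decreasing) (use h0 h1 in auto)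
    thus "h^3 \<le> h" by simp
  qed simp
  also have "\<dots> \<le> \<eta>^2" using sm unfolding \<Lambda>_def .
  finally have "\<bar>f p\<bar>^2 \<le> \<eta>^2" by simp
  thus ?thesis using eta by (rule power2_le_imp_le)
qed

theorem mainTheorem7:
  "\<forall>Cs>0. \<forall>\<gamma>>0. \<exists>C3>0. \<forall>\<epsilon>s>0. \<exists>C2>0.
     \<forall>lam1>0. \<forall>lam2>0. \<forall>a b::real. a < b \<longrightarrow>
     (\<exists>\<delta>>0. \<forall>(N::nat) (dt::real) (rc0::grid_fun) (rc1::grid_fun) (r0::grid_fun) (r1::grid_fun) (psi::grid_fun).
        let h = (b - a) / real N in
        N \<ge> 1 \<longrightarrow> h < \<delta> \<longrightarrow> dt < \<delta> \<longrightarrow>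
        lam1 * h \<le> dt \<longrightarrow> dt \<le> lam2 * h \<longrightarrow>
        (\<forall>p\<in>grid N. \<epsilon>s \<le> rc1 p \<and> rc1 p \<le> Cs) \<longrightarrow>
        (\<forall>p\<in>grid N. 0 < rc0 p \<and> rc0 p \<le> Cs) \<longrightarrow>
        (\<forall>p\<in>grid N. 0 < r0 p \<and> 0 < r1 p) \<longrightarrow>
        gnorm2 h N (\<lambda>p. rc0 p - r0 p) \<le> dt powr (15/4) + h powr (15/4) \<longrightarrow>
        gnorminf N psi \<le> h \<longrightarrow>
        (let t0 = (\<lambda>p. rc0 p - r0 p);
             t1 = (\<lambda>p. rc1 p - r1 p);
             tS = (\<lambda>p. Sfun (rc1 p) (rc0 p) - Sfun (r1 p) (r0 p));
             L = card {p \<in> grid N. r1 p \<ge> 2 * Cs + 1};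
             lhs = ginner h N t1 (\<lambda>p. \<gamma> * tS p + psi p);
             err = C2 * (\<gamma>^2 * (gnorm2 h N t0)^2 + (gnorm2 h N psi)^2)
         in lhs \<ge> Cs / 6 * \<gamma> * real L * h^3 - err
            \<and> (L = 0 \<longrightarrow> lhs \<ge> C3 * (gnorm2 h N t1)^2 - err)))"
proof (intro allI impI)
  fix Cs \<gamma> :: real
  assume Cs: "Cs > 0" and g: "\<gamma> > 0"
  define c where "c = (23/48)/(2*Cs+1)"
  have cpos: "c > 0" unfolding c_def using Cs by simp
  show "\<exists>C3>0. \<forall>\<epsilon>s>0. \<exists>C2>0.
     \<forall>lam1>0. \<forall>lam2>0. \<forall>a b::real. a < b \<longrightarrow>
     (\<exists>\<delta>>0. \<forall>(N::nat) (dt::real) (rc0::grid_fun) (rc1::grid_fun) (r0::grid_fun) (r1::grid_fun) (psi::grid_fun).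
        let h = (b - a) / real N in
        N \<ge> 1 \<longrightarrow> h < \<delta> \<longrightarrow> dt < \<delta> \<longrightarrow>
        lam1 * h \<le> dt \<longrightarrow> dt \<le> lam2 * h \<longrightarrow>
        (\<forall>p\<in>grid N. \<epsilon>s \<le> rc1 p \<and> rc1 p \<le> Cs) \<longrightarrow>
        (\<forall>p\<in>grid N. 0 < rc0 p \<and> rc0 p \<le> Cs) \<longrightarrow>
        (\<forall>p\<in>grid N. 0 < r0 p \<and> 0 < r1 p) \<longrightarrow>
        gnorm2 h N (\<lambda>p. rc0 p - r0 p) \<le> dt powr (15/4) + h powr (15/4) \<longrightarrow>
        gnorminf N psi \<le> h \<longrightarrow>
        (let t0 = (\<lambda>p. rc0 p - r0 p);
             t1 = (\<lambda>p. rc1 p - r1 p);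
             tS = (\<lambda>p. Sfun (rc1 p) (rc0 p) - Sfun (r1 p) (r0 p));
             L = card {p \<in> grid N. r1 p \<ge> 2 * Cs + 1};
             lhs = ginner h N t1 (\<lambda>p. \<gamma> * tS p + psi p);
             err = C2 * (\<gamma>^2 * (gnorm2 h N t0)^2 + (gnorm2 h N psi)^2)
         in lhs \<ge> Cs / 6 * \<gamma> * real L * h^3 - err
            \<and> (L = 0 \<longrightarrow> lhs \<ge> C3 * (gnorm2 h N t1)^2 - err)))"
  proof (rule exI[where x="\<gamma>*c/2"], intro conjI allI impI)
    show "\<gamma>*c/2 > 0" using g cpos by simp
    fix \<epsilon>s :: real assume es: "\<epsilon>s > 0"
    define K where "K = (7*Cs+1)/(6*\<epsilon>s^2)"
    have Kpos: "K \<ge> 0" unfolding K_def using Cs by simp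
    show "\<exists>C2>0. \<forall>lam1>0. \<forall>lam2>0. \<forall>a b::real. a < b \<longrightarrow>
     (\<exists>\<delta>>0. \<forall>(N::nat) (dt::real) (rc0::grid_fun) (rc1::grid_fun) (r0::grid_fun) (r1::grid_fun) (psi::grid_fun).
        let h = (b - a) / real N in
        N \<ge> 1 \<longrightarrow> h < \<delta> \<longrightarrow> dt < \<delta> \<longrightarrow>
        lam1 * h \<le> dt \<longrightarrow> dt \<le> lam2 * h \<longrightarrow>
        (\<forall>p\<in>grid N. \<epsilon>s \<le> rc1 p \<and> rc1 p \<le> Cs) \<longrightarrow>
        (\<forall>p\<in>grid N. 0 < rc0 p \<and> rc0 p \<le> Cs) \<longrightarrow>
        (\<forall>p\<in>grid N. 0 < r0 p \<and> 0 < r1 p) \<longrightarrow>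
        gnorm2 h N (\<lambda>p. rc0 p - r0 p) \<le> dt powr (15/4) + h powr (15/4) \<longrightarrow>
        gnorminf N psi \<le> h \<longrightarrow>
        (let t0 = (\<lambda>p. rc0 p - r0 p);
             t1 = (\<lambda>p. rc1 p - r1 p);
             tS = (\<lambda>p. Sfun (rc1 p) (rc0 p) - Sfun (r1 p) (r0 p));
             L = card {p \<in> grid N. r1 p \<ge> 2 * Cs + 1};
             lhs = ginner h N t1 (\<lambda>p. \<gamma> * tS p + psi p);
             err = C2 * (\<gamma>^2 * (gnorm2 h N t0)^2 + (gnorm2 h N psi)^2)
         in lhs \<ge> Cs / 6 * \<gamma> * real L * h^3 - err
            \<and> (L = 0 \<longrightarrow> lhs \<ge> \<gamma>*c/2 * (gnorm2 h N t1)^2 - err)))"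
    proof (rule exI[where x="max (K^2) 1/(\<gamma>*c)"], intro conjI allI impI)
      show "max (K^2) 1/(\<gamma>*c) > 0" using g cpos by simp
      fix lam1 lam2 a b :: real
      assume l1: "lam1 > 0" and l2: "lam2 > 0" and ab: "a < b"
      define \<eta> where "\<eta> = 7/(192*K+7)"
      define \<Lambda> where "\<Lambda> = lam2 powr (15/4)"
      define \<delta> where "\<delta> = min 1 (min (7*\<gamma>/192) (\<eta>^2/(\<Lambda>+1)^2))"
      have etapos: "\<eta> > 0" unfolding \<eta>_def using Kpos by simp
      have eta1: "\<eta> \<le> 1" unfolding \<eta>_def using Kpos by simp
      have etaK: "192*K*\<eta> \<le> 7" unfolding \<eta>_def using Kpos by (simp add: field_simps)
      have Lp: "\<Lambda> \<ge> 0" unfolding \<Lambda>_def by simp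
      show "\<exists>\<delta>>0. \<forall>(N::nat) (dt::real) (rc0::grid_fun) (rc1::grid_fun) (r0::grid_fun) (r1::grid_fun) (psi::grid_fun).
        let h = (b - a) / real N in
        N \<ge> 1 \<longrightarrow> h < \<delta> \<longrightarrow> dt < \<delta> \<longrightarrow>
        lam1 * h \<le> dt \<longrightarrow> dt \<le> lam2 * h \<longrightarrow>
        (\<forall>p\<in>grid N. \<epsilon>s \<le> rc1 p \<and> rc1 p \<le> Cs) \<longrightarrow>
        (\<forall>p\<in>grid N. 0 < rc0 p \<and> rc0 p \<le> Cs) \<longrightarrow>
        (\<forall>p\<in>grid N. 0 < r0 p \<and> 0 < r1 p) \<longrightarrow>
        gnorm2 h N (\<lambda>p. rc0 p - r0 p) \<le> dt powr (15/4) + h powr (15/4) \<longrightarrow>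
        gnorminf N psi \<le> h \<longrightarrow>
        (let t0 = (\<lambda>p. rc0 p - r0 p);
             t1 = (\<lambda>p. rc1 p - r1 p);
             tS = (\<lambda>p. Sfun (rc1 p) (rc0 p) - Sfun (r1 p) (r0 p));
             L = card {p \<in> grid N. r1 p \<ge> 2 * Cs + 1};
             lhs = ginner h N t1 (\<lambda>p. \<gamma> * tS p + psi p);
             err = max (K^2) 1/(\<gamma>*c) * (\<gamma>^2 * (gnorm2 h N t0)^2 + (gnorm2 h N psi)^2)
         in lhs \<ge> Cs / 6 * \<gamma> * real L * h^3 - err
            \<and> (L = 0 \<longrightarrow> lhs \<ge> \<gamma>*c/2 * (gnorm2 h N t1)^2 - err))"
      proof (rule exI[where x=\<delta>], intro conjI allI)
        show "\<delta> > 0" unfolding \<delta>_def using etapos g Lp by simp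
        fix N :: nat and dt :: real and rc0 rc1 r0 r1 psi :: grid_fun
        show "let h = (b - a) / real N in
        N \<ge> 1 \<longrightarrow> h < \<delta> \<longrightarrow> dt < \<delta> \<longrightarrow>
        lam1 * h \<le> dt \<longrightarrow> dt \<le> lam2 * h \<longrightarrow>
        (\<forall>p\<in>grid N. \<epsilon>s \<le> rc1 p \<and> rc1 p \<le> Cs) \<longrightarrow>
        (\<forall>p\<in>grid N. 0 < rc0 p \<and> rc0 p \<le> Cs) \<longrightarrow>
        (\<forall>p\<in>grid N. 0 < r0 p \<and> 0 < r1 p) \<longrightarrow>
        gnorm2 h N (\<lambda>p. rc0 p - r0 p) \<le> dt powr (15/4) + h powr (15/4) \<longrightarrow>
        gnorminf N psi \<le> h \<longrightarrow>
        (let t0 = (\<lambda>p. rc0 p - r0 p);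
             t1 = (\<lambda>p. rc1 p - r1 p);
             tS = (\<lambda>p. Sfun (rc1 p) (rc0 p) - Sfun (r1 p) (r0 p));
             L = card {p \<in> grid N. r1 p \<ge> 2 * Cs + 1};
             lhs = ginner h N t1 (\<lambda>p. \<gamma> * tS p + psi p);
             err = max (K^2) 1/(\<gamma>*c) * (\<gamma>^2 * (gnorm2 h N t0)^2 + (gnorm2 h N psi)^2)
         in lhs \<ge> Cs / 6 * \<gamma> * real L * h^3 - err
            \<and> (L = 0 \<longrightarrow> lhs \<ge> \<gamma>*c/2 * (gnorm2 h N t1)^2 - err))"
          unfolding Let_def[of "(b - a) / real N"]
        proof (intro impI)
          define h where "h = (b - a) / real N"
          assume N1: "N \<ge> 1" and hd: "(b - a) / real N < \<delta>" and dtd: "dt < \<delta>"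
            and d1: "lam1 * ((b - a) / real N) \<le> dt" and d2: "dt \<le> lam2 * ((b - a) / real N)"
            and H1: "\<forall>p\<in>grid N. \<epsilon>s \<le> rc1 p \<and> rc1 p \<le> Cs"
            and H2: "\<forall>p\<in>grid N. 0 < rc0 p \<and> rc0 p \<le> Cs"
            and H3: "\<forall>p\<in>grid N. 0 < r0 p \<and> 0 < r1 p"
            and nb: "gnorm2 ((b - a) / real N) N (\<lambda>p. rc0 p - r0 p) \<le> dt powr (15/4) + ((b - a) / real N) powr (15/4)"
            and pb: "gnorminf N psi \<le> (b - a) / real N"
          note hyps = hd d1 d2 nb pb
          note hyps' = hyps[folded h_def]
          have h0: "h > 0" unfolding h_def using ab N1 by simp
          have h1: "h \<le> 1" using hyps'(1) unfolding \<delta>_def by simp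
          have dt0: "dt > 0" using hyps'(2) l1 h0 by (smt (verit) mult_pos_pos)
          have H4: "\<forall>p\<in>grid N. \<bar>rc0 p - r0 p\<bar> \<le> \<eta>"
          proof
            fix p assume p: "p \<in> grid N"
            have "h < \<eta>^2/(\<Lambda>+1)^2" using hyps'(1) unfolding \<delta>_def by simp
            hence sm: "(\<Lambda>+1)^2 * h \<le> \<eta>^2" using Lp by (simp add: field_simps)
            show "\<bar>rc0 p - r0 p\<bar> \<le> \<eta>"
              by (rule t0small[OF h0 h1 dt0 hyps'(3) l2 hyps'(4) p _ less_imp_le[OF etapos]])
                 (use sm in \<open>simp add: \<Lambda>_def\<close>)
          qed
          have H6: "\<forall>p\<in>grid N. \<bar>psi p\<bar> \<le> 7*\<gamma>/192"
          proof
            fix p assume p: "p \<in> grid N"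
            have "\<bar>psi p\<bar> \<le> gnorminf N psi" unfolding gnorminf_def
              by (rule Max_ge) (use p finite_grid in auto)
            also have "\<dots> \<le> h" using hyps'(5) .
            also have "h \<le> 7*\<gamma>/192" using hyps'(1) unfolding \<delta>_def by simp
            finally show "\<bar>psi p\<bar> \<le> 7*\<gamma>/192" .
          qed
          have C: "let t0 = (\<lambda>p. rc0 p - r0 p);
             t1 = (\<lambda>p. rc1 p - r1 p);
             tS = (\<lambda>p. Sfun (rc1 p) (rc0 p) - Sfun (r1 p) (r0 p));
             L = card {p \<in> grid N. r1 p \<ge> 2 * Cs + 1};
             lhs = ginner h N t1 (\<lambda>p. \<gamma> * tS p + psi p);
             err = max (K^2) 1/(\<gamma>*c) * (\<gamma>^2 * (gnorm2 h N t0)^2 + (gnorm2 h N psi)^2)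
           in lhs \<ge> Cs / 6 * \<gamma> * real L * h^3 - err
            \<and> (L = 0 \<longrightarrow> lhs \<ge> \<gamma>*c/2 * (gnorm2 h N t1)^2 - err)"
            unfolding K_def c_def
            by (rule core) (use Cs g es h0 H1 H2 H3 H4 eta1 etaK[unfolded K_def] H6 in auto)
          show "let t0 = (\<lambda>p. rc0 p - r0 p);
             t1 = (\<lambda>p. rc1 p - r1 p);
             tS = (\<lambda>p. Sfun (rc1 p) (rc0 p) - Sfun (r1 p) (r0 p));
             L = card {p \<in> grid N. r1 p \<ge> 2 * Cs + 1};
             lhs = ginner ((b - a) / real N) N t1 (\<lambda>p. \<gamma> * tS p + psi p);
             err = max (K^2) 1/(\<gamma>*c) * (\<gamma>^2 * (gnorm2 ((b - a) / real N) N t0)^2 + (gnorm2 ((b - a) / real N) N psi)^2)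
           in lhs \<ge> Cs / 6 * \<gamma> * real L * ((b - a) / real N)^3 - err
            \<and> (L = 0 \<longrightarrow> lhs \<ge> \<gamma>*c/2 * (gnorm2 ((b - a) / real N) N t1)^2 - err)"
            using C unfolding h_def .
        qed
      qed
    qed
  qed
qed

end
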